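(* Let $u,v,w\in\mathfrak{S}_n$ with $v\le u\le w$, and let $1\le r\le n-1$ with $s_r\notin\mathrm{supp}(w)$. Then (1) $\underline{T}(u,[v,s_rw])=\underline{T}(u,[v,w])$ and $\underline{T}(u,[v,ws_r])=\underline{T}(u,[v,w])$; (2) $\overline{T}(u,[v,s_rw])=\overline{T}(u,[v,w])\cup\{(u^{-1}(r),u^{-1}(r+1))\}$; (3) $\overline{T}(u,[v,ws_r])=\overline{T}(u,[v,w])\cup\{(r,r+1)\}$; (4) $\overline{T}(s_ru,[v,s_rw])=\overline{T}(u,[v,w])$; (5) $\underline{T}(s_ru,[v,s_rw])=\underline{T}(u,[v,w])\cup\{(u^{-1}(r),u^{-1}(r+1))\}$; (6) $\overline{T}(us_r,[v,ws_r])=\{(s_r(i),s_r(j)) : (i,j)\in\overline{T}(u,[v,w])\}$; (7) $\underline{T}(us_r,[v,ws_r])=\{(s_r(i),s_r(j)) : (i,j)\in\underline{T}(u,[v,w])\}\cup\{(r,r+1)\}$.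
   Context: $\mathfrak{S}_n$ with simple transpositions $s_i=(i,i+1)$, length $\ell$, Bruhat order $\le$, and $[x,y]=\{u: x\le u\le y\}$. $\mathrm{supp}(w)$ is the set of simple transpositions occurring in a reduced decomposition of $w$. $T$ is the set of transpositions $(i,j)$ of $[n]$ (a transposition is identified with the unordered pair it swaps). Products are composition of permutations, so $u(i,j)$ denotes $u$ composed on the right with the transposition $(i,j)$. For $u\in[v,w]$: $\overline{T}(u,[v,w])=\{(i,j)\in T: u<u(i,j)\le w,\ \ell(u(i,j))-\ell(u)=1\}$ and $\underline{T}(u,[v,w])=\{(i,j)\in T: v\le u(i,j)<u,\ \ell(u)-\ell(u(i,j))=1\}$. *)

theory Defs
  imports "HOL-Combinatorics.Combinatorics"
begin

text \<open>Permutations of [n] = {1..n} are functions nat \<Rightarrow> nat with p permutes {1..n}.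
  Products are composition, so u(i,j) is u \<circ> transpose i j.\<close>

definition sperm :: "nat \<Rightarrow> (nat \<Rightarrow> nat) set" where
  "sperm n = {p. p permutes {1..n}}"

definition s :: "nat \<Rightarrow> nat \<Rightarrow> nat" where
  "s i = Transposition.transpose i (Suc i)"

definition len :: "nat \<Rightarrow> (nat \<Rightarrow> nat) \<Rightarrow> nat" where
  "len n w = card {(i, j). 1 \<le> i \<and> i < j \<and> j \<le> n \<and> w j < w i}"

definition bruhat_step :: "nat \<Rightarrow> (nat \<Rightarrow> nat) \<Rightarrow> (nat \<Rightarrow> nat) \<Rightarrow> bool" where
  "bruhat_step n u x \<longleftrightarrow> u \<in> sperm n \<and>
     (\<exists>i j. 1 \<le> i \<and> i < j \<and> j \<le> n \<and> x = u \<circ> Transposition.transpose i j \<and> len n u < len n x)"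

definition bruhat_le :: "nat \<Rightarrow> (nat \<Rightarrow> nat) \<Rightarrow> (nat \<Rightarrow> nat) \<Rightarrow> bool" where
  "bruhat_le n u w \<longleftrightarrow> u \<in> sperm n \<and> w \<in> sperm n \<and> (bruhat_step n)\<^sup>*\<^sup>* u w"

definition bruhat_lt :: "nat \<Rightarrow> (nat \<Rightarrow> nat) \<Rightarrow> (nat \<Rightarrow> nat) \<Rightarrow> bool" where
  "bruhat_lt n u w \<longleftrightarrow> bruhat_le n u w \<and> u \<noteq> w"

definition reduced_word :: "nat \<Rightarrow> (nat \<Rightarrow> nat) \<Rightarrow> nat list \<Rightarrow> bool" where
  "reduced_word n w a \<longleftrightarrow> (\<forall>i\<in>set a. 1 \<le> i \<and> i \<le> n - 1) \<and>
     foldr (\<lambda>i f. s i \<circ> f) a id = w \<and> length a = len n w"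

definition supp :: "nat \<Rightarrow> (nat \<Rightarrow> nat) \<Rightarrow> (nat \<Rightarrow> nat) set" where
  "supp n w = {s i | i a. reduced_word n w a \<and> i \<in> set a}"

text \<open>Transpositions (i,j) identified with unordered pairs {i,j}\<close>
definition Tup :: "nat \<Rightarrow> (nat \<Rightarrow> nat) \<Rightarrow> (nat \<Rightarrow> nat) \<Rightarrow> (nat \<Rightarrow> nat) \<Rightarrow> nat set set" where
  "Tup n u v w = {{i, j} | i j. 1 \<le> i \<and> i < j \<and> j \<le> n \<and>
      bruhat_lt n u (u \<circ> Transposition.transpose i j) \<and>
      bruhat_le n (u \<circ> Transposition.transpose i j) w \<and>
      int (len n (u \<circ> Transposition.transpose i j)) - int (len n u) = 1}"

definition Tdown :: "nat \<Rightarrow> (nat \<Rightarrow> nat) \<Rightarrow> (nat \<Rightarrow> nat) \<Rightarrow> (nat \<Rightarrow> nat) \<Rightarrow> nat set set" where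
  "Tdown n u v w = {{i, j} | i j. 1 \<le> i \<and> i < j \<and> j \<le> n \<and>
      bruhat_le n v (u \<circ> Transposition.transpose i j) \<and>
      bruhat_lt n (u \<circ> Transposition.transpose i j) u \<and>
      int (len n u) - int (len n (u \<circ> Transposition.transpose i j)) = 1}"

end

theory Submission
  imports Defs
begin


abbreviation tr :: "nat \<Rightarrow> nat \<Rightarrow> nat \<Rightarrow> nat" where "tr \<equiv> Transposition.transpose"

lemma perm_out: "x \<in> sperm n \<Longrightarrow> k \<notin> {1..n} \<Longrightarrow> x k = k"
  by (simp add: sperm_def permutes_not_in)
lemma perm_in: "x \<in> sperm n \<Longrightarrow> k \<in> {1..n} \<Longrightarrow> x k \<in> {1..n}"
  unfolding sperm_def using permutes_in_image[of x "{1..n}" k] by simp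
lemma perm_inj: "x \<in> sperm n \<Longrightarrow> inj x" using permutes_inj sperm_def by blast
lemma perm_eq_iff: "x \<in> sperm n \<Longrightarrow> x a = x b \<longleftrightarrow> a = b"
  using perm_inj by (metis injD)
lemma perm_tr: "x \<in> sperm n \<Longrightarrow> i \<in> {1..n} \<Longrightarrow> j \<in> {1..n} \<Longrightarrow> x \<circ> tr i j \<in> sperm n"
  unfolding sperm_def by (simp add: permutes_compose permutes_swap_id)
lemma perm_image: "x \<in> sperm n \<Longrightarrow> x ` {1..n} = {1..n}"
  by (simp add: sperm_def permutes_image)

definition Inv :: "nat \<Rightarrow> (nat \<Rightarrow> nat) \<Rightarrow> (nat \<times> nat) set" where
  "Inv n x = {(i, j). 1 \<le> i \<and> i < j \<and> j \<le> n \<and> x j < x i}"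

lemma len_Inv: "len n x = card (Inv n x)" by (simp add: len_def Inv_def)

lemma finite_Inv: "finite (Inv n x)"
  by (rule finite_subset[of _ "{1..n} \<times> {1..n}"]) (auto simp: Inv_def)

definition psi :: "nat \<Rightarrow> nat \<Rightarrow> nat \<times> nat \<Rightarrow> nat \<times> nat" where
  "psi i j p = (if fst p < i \<or> j < snd p then (tr i j (fst p), tr i j (snd p)) else p)"

lemma psi_inj: "i < j \<Longrightarrow> inj_on (psi i j) A"
  unfolding psi_def inj_on_def
  by (auto simp: transpose_def split: if_splits)

lemma lenA:
  assumes x: "x \<in> sperm n" and ij: "1 \<le> i" "i < j" "j \<le> n" and xij: "x i < x j"
  shows "len n x < len n (x \<circ> tr i j)"
proof -
  have sub: "psi i j ` Inv n x \<subseteq> Inv n (x \<circ> tr i j) - {(i,j)}"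
  proof
    fix p assume "p \<in> psi i j ` Inv n x"
    then obtain a b where ab: "(a,b) \<in> Inv n x" and p: "p = psi i j (a,b)" by auto
    from ab have a: "1 \<le> a" "a < b" "b \<le> n" "x b < x a" by (auto simp: Inv_def)
    show "p \<in> Inv n (x \<circ> tr i j) - {(i,j)}"
      using a ij xij unfolding p psi_def Inv_def
      by (auto simp: transpose_def split: if_splits)
  qed
  have mem: "(i,j) \<in> Inv n (x \<circ> tr i j)" using ij xij by (auto simp: Inv_def)
  have "card (Inv n x) = card (psi i j ` Inv n x)"
    using psi_inj[OF ij(2)] by (simp add: card_image)
  also have "\<dots> \<le> card (Inv n (x \<circ> tr i j) - {(i,j)})"
    by (rule card_mono) (use sub finite_Inv in auto)
  also have "\<dots> < card (Inv n (x \<circ> tr i j))"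
    by (rule card_Diff1_less[OF finite_Inv mem])
  finally show ?thesis by (simp add: len_Inv)
qed

lemma lenB:
  assumes x: "x \<in> sperm n" and ij: "1 \<le> i" "i < j" "j \<le> n" and xij: "x i < x j"
    and nb: "\<And>k. i < k \<Longrightarrow> k < j \<Longrightarrow> \<not> (x i < x k \<and> x k < x j)"
  shows "len n (x \<circ> tr i j) \<le> len n x + 1"
proof -
  have sub: "psi i j ` (Inv n (x \<circ> tr i j) - {(i,j)}) \<subseteq> Inv n x"
  proof
    fix p assume "p \<in> psi i j ` (Inv n (x \<circ> tr i j) - {(i,j)})"
    then obtain a b where ab: "(a,b) \<in> Inv n (x \<circ> tr i j)" "(a,b) \<noteq> (i,j)" and p: "p = psi i j (a,b)" by auto
    from ab have a: "1 \<le> a" "a < b" "b \<le> n" "x (tr i j b) < x (tr i j a)" by (auto simp: Inv_def)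
    have inj: "\<And>c d. x c = x d \<longleftrightarrow> c = d" using perm_eq_iff[OF x] .
    show "p \<in> Inv n x"
    proof (cases "a < i \<or> j < b")
      case True
      then show ?thesis using a ij unfolding p psi_def Inv_def
        by (auto simp: transpose_def split: if_splits)
    next
      case False
      hence ai: "i \<le> a" "b \<le> j" by auto
      have "x b < x a"
      proof (cases "a = i")
        case True
        hence "b \<noteq> j" using ab by auto
        hence bj: "b < j" using ai by auto
        have "x b < x j" using a True bj by (simp add: transpose_def)
        moreover have "x b \<noteq> x i" using inj True a by auto
        ultimately show ?thesis using nb[of b] True a bj by auto
      next
        case False
        hence ai': "i < a" using ai by auto
        show ?thesis
        proof (cases "b = j")
          case True
          have "x i < x a" using a True ai' by (simp add: transpose_def)
          moreover have "x a \<noteq> x j" using inj True a by auto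
          ultimately show ?thesis using nb[of a] True a ai' by auto
        next
          case False
          then show ?thesis using a ai' ai by (simp add: transpose_def)
        qed
      qed
      then show ?thesis using a False unfolding p psi_def Inv_def by auto
    qed
  qed
  have mem: "(i,j) \<in> Inv n (x \<circ> tr i j)" using ij xij by (auto simp: Inv_def)
  have "card (Inv n (x \<circ> tr i j) - {(i,j)}) = card (psi i j ` (Inv n (x \<circ> tr i j) - {(i,j)}))"
    using psi_inj[OF ij(2)] by (simp add: card_image)
  also have "\<dots> \<le> card (Inv n x)"
    by (rule card_mono) (use sub finite_Inv in auto)
  finally show ?thesis using mem finite_Inv by (simp add: len_Inv card_Diff_singleton)
qed

lemma len_cover:
  assumes x: "x \<in> sperm n" and ij: "1 \<le> i" "i < j" "j \<le> n" and xij: "x i < x j"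
    and nb: "\<And>k. i < k \<Longrightarrow> k < j \<Longrightarrow> \<not> (x i < x k \<and> x k < x j)"
  shows "len n (x \<circ> tr i j) = len n x + 1"
  using lenA[OF assms(1-5)] lenB[OF assms] by simp

lemma tr_tr: "x \<circ> tr i j \<circ> tr i j = x"
  by (simp add: o_assoc[symmetric])

lemma len_lt_dir:
  assumes x: "x \<in> sperm n" and ij: "1 \<le> i" "i < j" "j \<le> n"
  shows "len n x < len n (x \<circ> tr i j) \<longleftrightarrow> x i < x j"
proof
  assume l: "len n x < len n (x \<circ> tr i j)"
  show "x i < x j"
  proof (rule ccontr)
    assume "\<not> x i < x j"
    moreover have "x i \<noteq> x j" using perm_eq_iff[OF x] ij by auto
    ultimately have "(x \<circ> tr i j) i < (x \<circ> tr i j) j" by simp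
    moreover have "x \<circ> tr i j \<in> sperm n" using perm_tr x ij by auto
    ultimately have "len n (x \<circ> tr i j) < len n (x \<circ> tr i j \<circ> tr i j)"
      using lenA ij by blast
    with l show False by (simp add: tr_tr)
  qed
qed (use lenA assms in blast)



definition D :: "(nat \<Rightarrow> nat) \<Rightarrow> nat \<Rightarrow> nat \<Rightarrow> nat" where
  "D x a b = card {k \<in> {1..a}. b \<le> x k}"

lemma D0[simp]: "D x 0 b = 0" by (simp add: D_def)

lemma Dsuc: "D x (Suc a) b = D x a b + (if b \<le> x (Suc a) then 1 else 0)"
proof -
  have "{k \<in> {1..Suc a}. b \<le> x k} = (if b \<le> x (Suc a) then insert (Suc a) {k \<in> {1..a}. b \<le> x k} else {k \<in> {1..a}. b \<le> x k})"
    by (auto simp: le_Suc_eq)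
  then show ?thesis by (simp add: D_def)
qed

lemma Dform:
  assumes "1 \<le> i" "i < j"
  shows "D (x \<circ> tr i j) a b + (if i \<le> a \<and> a < j \<and> b \<le> x i then 1 else 0)
       = D x a b + (if i \<le> a \<and> a < j \<and> b \<le> x j then 1 else 0)"
proof (induction a)
  case 0 then show ?case using assms by simp
next
  case (Suc a)
  show ?case
  proof (cases "Suc a = i")
    case True
    then show ?thesis unfolding Dsuc using Suc assms by (auto simp: o_def)
  next
    case False
    show ?thesis
    proof (cases "Suc a = j")
      case True
      then show ?thesis unfolding Dsuc using Suc assms False by (auto simp: o_def)
    next
      case False2: False
      then show ?thesis unfolding Dsuc using Suc assms False by (auto simp: o_def)
    qed
  qed
qed

lemma Dform_ge:
  assumes "1 \<le> i" "i < j" "x i < x j"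
  shows "D x a b \<le> D (x \<circ> tr i j) a b"
  using Dform[OF assms(1,2), of x a b] assms(3) by (auto split: if_splits)

definition crit :: "(nat \<Rightarrow> nat) \<Rightarrow> (nat \<Rightarrow> nat) \<Rightarrow> bool" where
  "crit x y \<longleftrightarrow> (\<forall>a b. D x a b \<le> D y a b)"

lemma crit_trans: "crit x y \<Longrightarrow> crit y z \<Longrightarrow> crit x z"
  unfolding crit_def using le_trans by blast

lemma crit_refl: "crit x x" by (simp add: crit_def)

lemma step_crit: "bruhat_step n x z \<Longrightarrow> crit x z"
proof -
  assume "bruhat_step n x z"
  then obtain i j where x: "x \<in> sperm n" and ij: "1 \<le> i" "i < j" "j \<le> n"
    and z: "z = x \<circ> tr i j" and l: "len n x < len n z"
    unfolding bruhat_step_def by blast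
  have "x i < x j" using len_lt_dir[OF x ij] l z by simp
  then show ?thesis unfolding crit_def z using Dform_ge ij by blast
qed

lemma le_crit: "bruhat_le n x y \<Longrightarrow> crit x y"
proof -
  assume "bruhat_le n x y"
  hence "(bruhat_step n)\<^sup>*\<^sup>* x y" by (simp add: bruhat_le_def)
  then show ?thesis
    by (induction rule: rtranclp_induct) (auto intro: crit_refl crit_trans step_crit)
qed

lemma crit_step_exists:
  assumes x: "x \<in> sperm n" and y: "y \<in> sperm n" and c: "crit x y" and ne: "x \<noteq> y"
  shows "\<exists>i j. 1 \<le> i \<and> i < j \<and> j \<le> n \<and> x i < x j \<and> crit (x \<circ> tr i j) y"
proof -
  have ex: "\<exists>k. x k \<noteq> y k" using ne by auto
  define i where "i = (LEAST k. x k \<noteq> y k)"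
  have xi: "x i \<noteq> y i" unfolding i_def using LeastI_ex[OF ex] .
  have pre: "\<And>k. k < i \<Longrightarrow> x k = y k" unfolding i_def using not_less_Least by blast
  have i1: "i \<in> {1..n}"
  proof (rule ccontr)
    assume "i \<notin> {1..n}"
    then show False using perm_out[OF x] perm_out[OF y] xi by metis
  qed
  have Dpre: "\<And>b. D x (i - 1) b = D y (i - 1) b"
  proof -
    fix b
    have "{k \<in> {1..i-1}. b \<le> x k} = {k \<in> {1..i-1}. b \<le> y k}" using pre i1 by force
    then show "D x (i - 1) b = D y (i - 1) b" by (simp add: D_def)
  qed
  have isuc: "i = Suc (i - 1)" using i1 by auto
  have lt: "x i < y i"
  proof (rule ccontr)
    assume "\<not> x i < y i"
    hence "y i < x i" using xi by auto
    have "D x i (x i) = D x (i-1) (x i) + 1" using Dsuc[of x "i-1" "x i"] isuc by simp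
    moreover have "D y i (x i) = D y (i-1) (x i)" using Dsuc[of y "i-1" "x i"] isuc \<open>y i < x i\<close> by simp
    ultimately have "D y i (x i) < D x i (x i)" using Dpre by simp
    with c show False unfolding crit_def by (metis not_le)
  qed
  have "y i \<in> {1..n}" using perm_in[OF y i1] .
  then obtain k0 where k0: "k0 \<in> {1..n}" "x k0 = y i" using perm_image[OF x] by (metis imageE)
  have ik0: "i < k0"
  proof (rule ccontr)
    assume "\<not> i < k0"
    moreover have "k0 \<noteq> i" using k0 xi by auto
    ultimately have "k0 < i" by auto
    hence "y k0 = y i" using pre k0 by auto
    hence "k0 = i" using perm_eq_iff[OF y] by auto
    with \<open>k0 \<noteq> i\<close> show False by simp
  qed
  have exj: "\<exists>k. i < k \<and> x i < x k \<and> x k \<le> y i" using ik0 k0 lt by auto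
  define j where "j = (LEAST k. i < k \<and> x i < x k \<and> x k \<le> y i)"
  have jp: "i < j \<and> x i < x j \<and> x j \<le> y i" unfolding j_def using LeastI_ex[OF exj] .
  have jk0: "j \<le> k0" unfolding j_def using ik0 k0 lt by (intro Least_le) auto
  have mn: "\<And>k. i < k \<Longrightarrow> k < j \<Longrightarrow> \<not> (x i < x k \<and> x k \<le> y i)"
    unfolding j_def using not_less_Least by blast
  have key: "D x a b < D y a b" if ab: "i \<le> a" "a < j" "x i < b" "b \<le> y i" for a b
  proof -
    define c where "c = Suc (y i)"
    define L where "L = {k \<in> {1..a}. k < i \<and> b \<le> x k \<and> x k \<le> y i}"
    have L': "L = {k \<in> {1..a}. k < i \<and> b \<le> y k \<and> y k \<le> y i}" unfolding L_def using pre by auto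
    have Sx: "{k \<in> {1..a}. b \<le> x k} = {k \<in> {1..a}. c \<le> x k} \<union> L"
    proof -
      have "k < i" if "k \<in> {1..a}" "b \<le> x k" "x k \<le> y i" for k
      proof (rule ccontr)
        assume "\<not> k < i"
        moreover have "k \<noteq> i" using that ab by auto
        ultimately have "i < k" by auto
        then show False using mn[of k] that ab by auto
      qed
      then show ?thesis unfolding L_def c_def using ab by auto
    qed
    have Sy: "{k \<in> {1..a}. b \<le> y k} \<supseteq> {k \<in> {1..a}. c \<le> y k} \<union> L \<union> {i}"
      unfolding L' c_def using ab i1 by auto
    have fin: "finite L" unfolding L_def by auto
    have d1: "{k \<in> {1..a}. c \<le> x k} \<inter> L = {}" unfolding L_def c_def by auto
    have d2: "({k \<in> {1..a}. c \<le> y k} \<union> L) \<inter> {i} = {}" unfolding L' c_def by auto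
    have d3: "{k \<in> {1..a}. c \<le> y k} \<inter> L = {}" unfolding L' c_def by auto
    have "D x a b = D x a c + card L" unfolding D_def Sx using d1 fin
      by (simp add: card_Un_disjoint)
    moreover have "D y a b \<ge> D y a c + card L + 1"
    proof -
      have "card ({k \<in> {1..a}. c \<le> y k} \<union> L \<union> {i}) \<le> D y a b"
        unfolding D_def by (rule card_mono) (use Sy in auto)
      moreover have "card ({k \<in> {1..a}. c \<le> y k} \<union> L \<union> {i}) = D y a c + card L + 1"
        using d2 d3 fin by (simp add: card_Un_disjoint D_def)
      ultimately show ?thesis by simp
    qed
    moreover have "D x a c \<le> D y a c" using c unfolding crit_def by blast
    ultimately show ?thesis by simp
  qed
  have "crit (x \<circ> tr i j) y"
    unfolding crit_def
  proof (intro allI)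
    fix a b
    have f: "D (x \<circ> tr i j) a b + (if i \<le> a \<and> a < j \<and> b \<le> x i then 1 else 0)
       = D x a b + (if i \<le> a \<and> a < j \<and> b \<le> x j then 1 else 0)"
      using Dform[of i j x a b] i1 jp by auto
    show "D (x \<circ> tr i j) a b \<le> D y a b"
    proof (cases "i \<le> a \<and> a < j \<and> x i < b \<and> b \<le> x j")
      case True
      then have "D x a b < D y a b" using key[of a b] jp by auto
      then show ?thesis using f True by (auto split: if_splits)
    next
      case False
      then have "D (x \<circ> tr i j) a b \<le> D x a b" using f by (auto split: if_splits)
      then show ?thesis using c unfolding crit_def using le_trans by blast
    qed
  qed
  then show ?thesis using i1 jp jk0 k0 by (intro exI[of _ i] exI[of _ j]) auto
qed

definition M :: "nat \<Rightarrow> (nat \<Rightarrow> nat) \<Rightarrow> nat" where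
  "M n z = (\<Sum>p \<in> {1..n} \<times> {1..n}. D z (fst p) (snd p))"

lemma crit_rt:
  assumes "x \<in> sperm n" "y \<in> sperm n" "crit x y"
  shows "(bruhat_step n)\<^sup>*\<^sup>* x y"
  using assms
proof (induction "M n y - M n x" arbitrary: x rule: less_induct)
  case less
  show ?case
  proof (cases "x = y")
    case True then show ?thesis by simp
  next
    case False
    obtain i j where ij: "1 \<le> i" "i < j" "j \<le> n" "x i < x j" and cz: "crit (x \<circ> tr i j) y"
      using crit_step_exists[OF less.prems False] by blast
    let ?z = "x \<circ> tr i j"
    have z: "?z \<in> sperm n" using perm_tr less.prems ij by auto
    have st: "bruhat_step n x ?z" unfolding bruhat_step_def
      using less.prems(1) ij lenA[OF less.prems(1) ij] by blast
    have xj: "x j \<in> {1..n}" using perm_in less.prems(1) ij by auto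
    have "M n x < M n ?z" unfolding M_def
    proof (rule sum_strict_mono_ex1)
      show "\<forall>p\<in>{1..n} \<times> {1..n}. D x (fst p) (snd p) \<le> D ?z (fst p) (snd p)"
        using Dform_ge ij by blast
      have "D x i (x j) < D ?z i (x j)" using Dform[of i j x i "x j"] ij by simp
      then show "\<exists>p\<in>{1..n} \<times> {1..n}. D x (fst p) (snd p) < D ?z (fst p) (snd p)"
        using ij xj by (intro bexI[of _ "(i, x j)"]) auto
    qed simp
    moreover have "M n ?z \<le> M n y" unfolding M_def
      by (rule sum_mono) (use cz in \<open>auto simp: crit_def\<close>)
    ultimately have "(bruhat_step n)\<^sup>*\<^sup>* ?z y" using less.hyps[of ?z] z less.prems cz by simp
    then show ?thesis by (rule converse_rtranclp_into_rtranclp[of "bruhat_step n", OF st])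
  qed
qed

lemma bruhat_iff: "bruhat_le n x y \<longleftrightarrow> x \<in> sperm n \<and> y \<in> sperm n \<and> crit x y"
  using le_crit crit_rt unfolding bruhat_le_def by blast



definition inP :: "nat \<Rightarrow> (nat \<Rightarrow> nat) \<Rightarrow> bool" where
  "inP r x \<longleftrightarrow> (\<forall>k. 1 \<le> k \<and> k \<le> r \<longrightarrow> x k \<le> r)"

lemma P_img:
  assumes x: "x \<in> sperm n" and r: "r \<le> n" and P: "inP r x"
  shows "x ` {1..r} = {1..r}"
proof (rule endo_inj_surj)
  show "x ` {1..r} \<subseteq> {1..r}" using P perm_in[OF x] r unfolding inP_def by fastforce
  show "inj_on x {1..r}" using perm_inj[OF x] by (simp add: inj_on_def inj_def)
qed simp

lemma P_gt:
  assumes x: "x \<in> sperm n" and r: "r \<le> n" and P: "inP r x" and k: "r < k"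
  shows "r < x k"
proof (cases "k \<in> {1..n}")
  case False then show ?thesis using perm_out[OF x False] k by simp
next
  case True
  show ?thesis
  proof (rule ccontr)
    assume "\<not> r < x k"
    moreover have "1 \<le> x k" using perm_in[OF x True] by simp
    ultimately have "x k \<in> x ` {1..r}" using P_img[OF x r P] by auto
    then obtain k' where "k' \<in> {1..r}" "x k = x k'" by auto
    then show False using perm_eq_iff[OF x] k by auto
  qed
qed

lemma D_P1:
  assumes x: "x \<in> sperm n" and r: "r \<le> n" and P: "inP r x"
  shows "D x a (Suc r) = a - r"
proof (induction a)
  case 0 then show ?case by simp
next
  case (Suc a)
  have "Suc r \<le> x (Suc a) \<longleftrightarrow> r < Suc a"
    using P_gt[OF x r P, of "Suc a"] P unfolding inP_def by (cases "Suc a \<le> r") auto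
  then show ?case using Suc by (simp add: Dsuc Suc_diff_le)
qed

lemma D_P2:
  assumes x: "x \<in> sperm n" and r: "r \<le> n" and P: "inP r x"
  shows "D x r b = card {v \<in> {1..r}. b \<le> v}"
proof -
  have "x ` {k \<in> {1..r}. b \<le> x k} = {v \<in> x ` {1..r}. b \<le> v}"
    by auto
  hence e: "x ` {k \<in> {1..r}. b \<le> x k} = {v \<in> {1..r}. b \<le> v}"
    using P_img[OF x r P] by simp
  have i: "inj_on x {k \<in> {1..r}. b \<le> x k}" using perm_inj[OF x] by (simp add: inj_on_def inj_def)
  show ?thesis unfolding D_def using card_image[OF i] e by simp
qed

lemma D_P2r: "x \<in> sperm n \<Longrightarrow> r \<le> n \<Longrightarrow> inP r x \<Longrightarrow> 1 \<le> r \<Longrightarrow> D x r r = 1"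
proof -
  assume a: "x \<in> sperm n" "r \<le> n" "inP r x" "1 \<le> r"
  have "{v \<in> {1..r}. r \<le> v} = {r}" using a by auto
  then show ?thesis using D_P2[OF a(1-3)] by simp
qed

lemma D_P2rr: "x \<in> sperm n \<Longrightarrow> r \<le> n \<Longrightarrow> inP r x \<Longrightarrow> D x r (Suc (Suc r)) = 0"
proof -
  assume a: "x \<in> sperm n" "r \<le> n" "inP r x"
  have "{v \<in> {1..r}. Suc (Suc r) \<le> v} = {}" by auto
  then show ?thesis using D_P2[OF a(1-3)] by simp
qed

lemma D_Peq: "x \<in> sperm n \<Longrightarrow> y \<in> sperm n \<Longrightarrow> r \<le> n \<Longrightarrow> inP r x \<Longrightarrow> inP r y \<Longrightarrow> D x r b = D y r b"
  using D_P2[of x n r b] D_P2[of y n r b] by simp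

lemma P_iff:
  assumes x: "x \<in> sperm n" and r: "r \<le> n"
  shows "inP r x \<longleftrightarrow> D x r (Suc r) = 0"
proof
  assume "inP r x" then show "D x r (Suc r) = 0" using D_P1[OF x r] by simp
next
  assume "D x r (Suc r) = 0"
  hence "{k \<in> {1..r}. Suc r \<le> x k} = {}" unfolding D_def by simp
  then show "inP r x" unfolding inP_def by force
qed

lemma crit_P:
  assumes "crit y x" "inP r x" "x \<in> sperm n" "y \<in> sperm n" "r \<le> n"
  shows "inP r y"
proof -
  have "D y r (Suc r) \<le> D x r (Suc r)" using assms(1) unfolding crit_def by blast
  moreover have "D x r (Suc r) = 0" using P_iff[OF assms(3,5)] assms(2) by simp
  ultimately show ?thesis using P_iff[OF assms(4,5)] by simp
qed

lemma s_apply: "s r v = (if v = r then Suc r else if v = Suc r then r else v)"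
  by (simp add: s_def transpose_def)

lemma s_sperm: "1 \<le> r \<Longrightarrow> r < n \<Longrightarrow> s r \<in> sperm n"
  unfolding sperm_def s_def by (simp add: permutes_swap_id)

lemma Ds1: "b \<noteq> Suc r \<Longrightarrow> D (s r \<circ> x) a b = D x a b"
  by (induction a) (auto simp: Dsuc s_apply)

lemma Ds2: "D (s r \<circ> x) a (Suc r) + D x a (Suc r) = D x a r + D x a (Suc (Suc r))"
  by (induction a) (auto simp: Dsuc s_apply)

lemma Drs1: "a \<noteq> r \<Longrightarrow> 1 \<le> r \<Longrightarrow> D (x \<circ> s r) a b = D x a b"
proof -
  assume a: "a \<noteq> r" "1 \<le> r"
  show ?thesis
  proof (cases "a < r")
    case True then show ?thesis using Dform[of r "Suc r" x a b] a by (simp add: s_def)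
  next
    case False
    hence "\<not> a < Suc r" using a by auto
    then show ?thesis using Dform[of r "Suc r" x a b] a by (simp add: s_def)
  qed
qed

lemma Drs2:
  assumes "1 \<le> r"
  shows "D (x \<circ> s r) r b + D x r b = D x (r - 1) b + D x (Suc r) b"
proof -
  have "D (x \<circ> s r) r b + (if b \<le> x r then 1 else 0) = D x r b + (if b \<le> x (Suc r) then 1 else 0)"
    using Dform[of r "Suc r" x r b] assms by (simp add: s_def)
  moreover have "D x (Suc r) b = D x r b + (if b \<le> x (Suc r) then 1 else 0)" by (rule Dsuc)
  moreover have "D x r b = D x (r - 1) b + (if b \<le> x r then 1 else 0)"
    using Dsuc[of x "r - 1" b] assms by simp
  ultimately show ?thesis by (auto split: if_splits)
qed

context
  fixes n r :: nat
  assumes r1: "1 \<le> r" and rn: "r < n"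
begin

lemma G3:
  assumes x: "x \<in> sperm n" and y: "y \<in> sperm n" and Px: "inP r x" and Py: "inP r y"
  shows "crit x y \<longleftrightarrow> crit (s r \<circ> x) (s r \<circ> y)"
proof
  assume c: "crit x y"
  show "crit (s r \<circ> x) (s r \<circ> y)" unfolding crit_def
  proof (intro allI)
    fix a b
    show "D (s r \<circ> x) a b \<le> D (s r \<circ> y) a b"
    proof (cases "b = Suc r")
      case False then show ?thesis using c Ds1[OF False, of x a] Ds1[OF False, of y a] unfolding crit_def by simp
    next
      case True
      have "D (s r \<circ> x) a (Suc r) + D x a (Suc r) = D x a r + D x a (Suc (Suc r))" by (rule Ds2)
      moreover have "D (s r \<circ> y) a (Suc r) + D y a (Suc r) = D y a r + D y a (Suc (Suc r))" by (rule Ds2)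
      moreover have "D x a (Suc r) = D y a (Suc r)" using D_P1 x y Px Py rn by simp
      moreover have "D x a r \<le> D y a r" "D x a (Suc (Suc r)) \<le> D y a (Suc (Suc r))" using c unfolding crit_def by auto
      ultimately show ?thesis unfolding True by linarith
    qed
  qed
next
  assume c: "crit (s r \<circ> x) (s r \<circ> y)"
  show "crit x y" unfolding crit_def
  proof (intro allI)
    fix a b
    show "D x a b \<le> D y a b"
    proof (cases "b = Suc r")
      case False then show ?thesis using c Ds1[OF False, of x a] Ds1[OF False, of y a] unfolding crit_def by (metis)
    next
      case True
      then show ?thesis using D_P1 x y Px Py rn by simp
    qed
  qed
qed

lemma crit_sL:
  assumes x: "x \<in> sperm n" and y: "y \<in> sperm n" and Px: "inP r x" and Py: "inP r y"
    and c: "crit x (s r \<circ> y)"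
  shows "crit x y"
  unfolding crit_def
proof (intro allI)
  fix a b
  show "D x a b \<le> D y a b"
  proof (cases "b = Suc r")
    case False then show ?thesis using c Ds1[OF False, of y a] unfolding crit_def by (metis)
  next
    case True
    then show ?thesis using D_P1 x y Px Py rn by simp
  qed
qed

lemma G4:
  assumes x: "x \<in> sperm n" and y: "y \<in> sperm n" and Px: "inP r x" and Py: "inP r y"
  shows "crit x y \<longleftrightarrow> crit (x \<circ> s r) (y \<circ> s r)"
proof
  assume c: "crit x y"
  show "crit (x \<circ> s r) (y \<circ> s r)" unfolding crit_def
  proof (intro allI)
    fix a b
    show "D (x \<circ> s r) a b \<le> D (y \<circ> s r) a b"
    proof (cases "a = r")
      case False then show ?thesis using c Drs1[OF False r1, of x b] Drs1[OF False r1, of y b] unfolding crit_def by simp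
    next
      case True
      have "D (x \<circ> s r) r b + D x r b = D x (r - 1) b + D x (Suc r) b" by (rule Drs2[OF r1])
      moreover have "D (y \<circ> s r) r b + D y r b = D y (r - 1) b + D y (Suc r) b" by (rule Drs2[OF r1])
      moreover have "D x r b = D y r b" using D_Peq[of x n y r b] x y Px Py rn by simp
      moreover have "D x (r - 1) b \<le> D y (r - 1) b" "D x (Suc r) b \<le> D y (Suc r) b" using c unfolding crit_def by auto
      ultimately show ?thesis unfolding True by linarith
    qed
  qed
next
  assume c: "crit (x \<circ> s r) (y \<circ> s r)"
  show "crit x y" unfolding crit_def
  proof (intro allI)
    fix a b
    show "D x a b \<le> D y a b"
    proof (cases "a = r")
      case False then show ?thesis using c Drs1[OF False r1, of x b] Drs1[OF False r1, of y b] unfolding crit_def by metis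
    next
      case True
      then show ?thesis using D_Peq[of x n y r b] x y Px Py rn by simp
    qed
  qed
qed

lemma crit_sR:
  assumes x: "x \<in> sperm n" and y: "y \<in> sperm n" and Px: "inP r x" and Py: "inP r y"
    and c: "crit x (y \<circ> s r)"
  shows "crit x y"
  unfolding crit_def
proof (intro allI)
  fix a b
  show "D x a b \<le> D y a b"
  proof (cases "a = r")
    case False then show ?thesis using c Drs1[OF False r1, of y b] unfolding crit_def by metis
  next
    case True
    then show ?thesis using D_Peq[of x n y r b] x y Px Py rn by simp
  qed
qed

lemma sL_tr:
  assumes x: "x \<in> sperm n"
  shows "s r \<circ> x = x \<circ> tr (inv x r) (inv x (Suc r))"
proof -
  have "bij x" using x unfolding sperm_def by (simp add: permutes_bij)
  then show ?thesis unfolding s_def by (rule transpose_comp_eq)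
qed

lemma sL_pos:
  assumes x: "x \<in> sperm n" and P: "inP r x"
  shows "1 \<le> inv x r" "inv x r \<le> r" "r < inv x (Suc r)" "inv x (Suc r) \<le> n"
    "x (inv x r) = r" "x (inv x (Suc r)) = Suc r"
proof -
  have xp: "x permutes {1..n}" using x by (simp add: sperm_def)
  have ip: "inv x permutes {1..n}" using permutes_inv[OF xp] .
  show e1: "x (inv x r) = r" "x (inv x (Suc r)) = Suc r" using permutes_inverses[OF xp] by auto
  have "inv x r \<in> {1..n}" using perm_in[of "inv x" n r] ip r1 rn by (simp add: sperm_def)
  then show "1 \<le> inv x r" by simp
  have "inv x (Suc r) \<in> {1..n}" using perm_in[of "inv x" n "Suc r"] ip r1 rn by (simp add: sperm_def)
  then show "inv x (Suc r) \<le> n" by simp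
  show "inv x r \<le> r"
  proof (rule ccontr)
    assume "\<not> inv x r \<le> r"
    then have "r < x (inv x r)" using P_gt[OF x _ P] rn by simp
    then show False using e1 by simp
  qed
  show "r < inv x (Suc r)"
  proof (rule ccontr)
    assume "\<not> r < inv x (Suc r)"
    moreover have "1 \<le> inv x (Suc r)" using \<open>inv x (Suc r) \<in> {1..n}\<close> by simp
    ultimately have "x (inv x (Suc r)) \<le> r" using P unfolding inP_def by auto
    then show False using e1 by simp
  qed
qed

lemma len_sL:
  assumes x: "x \<in> sperm n" and P: "inP r x"
  shows "len n (s r \<circ> x) = len n x + 1"
proof -
  note p = sL_pos[OF x P]
  have "len n (x \<circ> tr (inv x r) (inv x (Suc r))) = len n x + 1"
    by (rule len_cover[OF x]) (use p in auto)
  then show ?thesis using sL_tr[OF x] by simp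
qed

lemma len_sR:
  assumes x: "x \<in> sperm n" and P: "inP r x"
  shows "len n (x \<circ> s r) = len n x + 1"
proof -
  have "x r \<le> r" using P r1 unfolding inP_def by auto
  moreover have "r < x (Suc r)" using P_gt[OF x _ P] rn by simp
  ultimately have "len n (x \<circ> tr r (Suc r)) = len n x + 1"
    by (intro len_cover[OF x]) (use r1 rn in auto)
  then show ?thesis by (simp add: s_def)
qed

lemma sL_sperm: "x \<in> sperm n \<Longrightarrow> s r \<circ> x \<in> sperm n"
  using s_sperm[OF r1 rn] unfolding sperm_def by (simp add: permutes_compose)
lemma sR_sperm: "x \<in> sperm n \<Longrightarrow> x \<circ> s r \<in> sperm n"
  using s_sperm[OF r1 rn] unfolding sperm_def by (simp add: permutes_compose)

lemma le_sL:
  assumes x: "x \<in> sperm n" and P: "inP r x"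
  shows "bruhat_le n x (s r \<circ> x)"
proof -
  note p = sL_pos[OF x P]
  have l: "len n x < len n (s r \<circ> x)" using len_sL[OF x P] by simp
  have "1 \<le> inv x r \<and> inv x r < inv x (Suc r) \<and> inv x (Suc r) \<le> n \<and>
     s r \<circ> x = x \<circ> tr (inv x r) (inv x (Suc r)) \<and> len n x < len n (s r \<circ> x)"
    using p l sL_tr[OF x] by linarith
  then have "bruhat_step n x (s r \<circ> x)" unfolding bruhat_step_def
    using x by blast
  then show ?thesis unfolding bruhat_le_def using x sL_sperm by auto
qed

lemma le_sR:
  assumes x: "x \<in> sperm n" and P: "inP r x"
  shows "bruhat_le n x (x \<circ> s r)"
proof -
  have "1 \<le> r \<and> r < Suc r \<and> Suc r \<le> n \<and> x \<circ> s r = x \<circ> tr r (Suc r) \<and> len n x < len n (x \<circ> s r)"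
    using len_sR[OF x P] r1 rn by (simp add: s_def)
  then have "bruhat_step n x (x \<circ> s r)" unfolding bruhat_step_def
    using x by blast
  then show ?thesis unfolding bruhat_le_def using x sR_sperm by auto
qed

end



lemma foldr_comp: "foldr (\<lambda>i f. s i \<circ> f) b g = foldr (\<lambda>i f. s i \<circ> f) b id \<circ> g"
  by (induction b arbitrary: g) (simp_all add: o_assoc)

lemma len_id: "len n id = 0"
proof -
  have e: "{(i, j). 1 \<le> i \<and> i < j \<and> j \<le> n \<and> j < (i :: nat)} = {}" by auto
  show ?thesis unfolding len_def id_apply e by simp
qed

lemma descent:
  assumes w: "w \<in> sperm n" and ne: "w \<noteq> id"
  shows "\<exists>i. 1 \<le> i \<and> i < n \<and> w (Suc i) < w i"
proof (rule ccontr)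
  assume nd: "\<not> ?thesis"
  have inc: "w i < w (Suc i)" if "1 \<le> i" "i < n" for i
  proof -
    have "w (Suc i) \<noteq> w i" using perm_eq_iff[OF w] by simp
    then show ?thesis using nd that by auto
  qed
  have ge: "k \<le> w k" if k: "1 \<le> k" "k \<le> n" for k
    using k
  proof (induction k rule: dec_induct)
    case base then show ?case using perm_in[OF w, of 1] by simp
  next
    case (step m)
    then show ?case using inc[of m] by simp
  qed
  have le: "w k \<le> k" if k: "1 \<le> k" "k \<le> n" for k
    using k(2)
  proof (induction k rule: inc_induct)
    case base then show ?case using perm_in[OF w, of n] k by simp
  next
    case (step m)
    then show ?case using inc[of m] k by simp
  qed
  have "w = id"
  proof
    fix k show "w k = id k"
    proof (cases "k \<in> {1..n}")
      case True then show ?thesis using ge le by force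
    next
      case False then show ?thesis using perm_out[OF w False] by simp
    qed
  qed
  with ne show False by simp
qed

lemma exists_rw: "w \<in> sperm n \<Longrightarrow> \<exists>a. reduced_word n w a"
proof (induction "len n w" arbitrary: w rule: less_induct)
  case less
  show ?case
  proof (cases "w = id")
    case True
    then show ?thesis by (intro exI[of _ "[]"]) (simp add: reduced_word_def len_id)
  next
    case False
    obtain i where i: "1 \<le> i" "i < n" "w (Suc i) < w i" using descent[OF less.prems False] by blast
    let ?w = "w \<circ> s i"
    have w': "?w \<in> sperm n" using less.prems s_sperm[OF i(1,2)] unfolding sperm_def by (simp add: permutes_compose)
    have wb: "?w \<circ> s i = w" by (simp add: s_def o_assoc[symmetric])
    have lt: "?w i < ?w (Suc i)" using i by (simp add: s_apply)
    have "len n (?w \<circ> tr i (Suc i)) = len n ?w + 1"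
      by (rule len_cover[OF w']) (use i lt in auto)
    hence lw: "len n w = len n ?w + 1" using wb by (simp add: s_def)
    obtain b where b: "reduced_word n ?w b" using less.hyps[of ?w] lw w' by auto
    have "reduced_word n w (b @ [i])"
      using b i wb lw unfolding reduced_word_def by (auto simp: foldr_comp[of b "s i"])
    then show ?thesis by blast
  qed
qed

lemma word_P: "\<forall>i\<in>set a. 1 \<le> i \<and> i \<noteq> r \<Longrightarrow> 1 \<le> k \<Longrightarrow> k \<le> r \<Longrightarrow>
   1 \<le> foldr (\<lambda>i f. s i \<circ> f) a id k \<and> foldr (\<lambda>i f. s i \<circ> f) a id k \<le> r"
  by (induction a) (auto simp: s_apply)

lemma supp_P:
  assumes w: "w \<in> sperm n" and ns: "s r \<notin> supp n w"
  shows "inP r w"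
proof -
  obtain a where a: "reduced_word n w a" using exists_rw[OF w] by blast
  have "r \<notin> set a"
  proof
    assume "r \<in> set a"
    then have "s r \<in> supp n w" unfolding supp_def using a by blast
    with ns show False by simp
  qed
  then have "\<forall>i\<in>set a. 1 \<le> i \<and> i \<noteq> r" using a unfolding reduced_word_def by auto
  then show ?thesis unfolding inP_def using word_P[of a r] a unfolding reduced_word_def by auto
qed



definition CU :: "nat \<Rightarrow> (nat \<Rightarrow> nat) \<Rightarrow> (nat \<Rightarrow> nat) \<Rightarrow> nat \<Rightarrow> nat \<Rightarrow> bool" where
  "CU n u w i j \<longleftrightarrow> bruhat_lt n u (u \<circ> Transposition.transpose i j) \<and>
      bruhat_le n (u \<circ> Transposition.transpose i j) w \<and>
      int (len n (u \<circ> Transposition.transpose i j)) - int (len n u) = 1"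

definition CD :: "nat \<Rightarrow> (nat \<Rightarrow> nat) \<Rightarrow> (nat \<Rightarrow> nat) \<Rightarrow> nat \<Rightarrow> nat \<Rightarrow> bool" where
  "CD n u v i j \<longleftrightarrow> bruhat_le n v (u \<circ> Transposition.transpose i j) \<and>
      bruhat_lt n (u \<circ> Transposition.transpose i j) u \<and>
      int (len n u) - int (len n (u \<circ> Transposition.transpose i j)) = 1"

lemma Tup_eq: "Tup n u v w = {{i, j} | i j. 1 \<le> i \<and> i < j \<and> j \<le> n \<and> CU n u w i j}"
  unfolding Tup_def CU_def by (rule refl)

lemma Tdown_eq: "Tdown n u v w = {{i, j} | i j. 1 \<le> i \<and> i < j \<and> j \<le> n \<and> CD n u v i j}"
  unfolding Tdown_def CD_def by (rule refl)

lemma CU_sym: "CU n u w i j = CU n u w j i"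
  unfolding CU_def by (simp add: transpose_commute)
lemma CD_sym: "CD n u v i j = CD n u v j i"
  unfolding CD_def by (simp add: transpose_commute)

lemma lt_iff: "bruhat_lt n x y \<longleftrightarrow> x \<in> sperm n \<and> y \<in> sperm n \<and> crit x y \<and> x \<noteq> y"
  unfolding bruhat_lt_def bruhat_iff by blast

lemma cross:
  assumes x: "x \<in> sperm n" and P: "inP r x" and ij: "1 \<le> i" "i < j" and nP: "\<not> inP r (x \<circ> tr i j)"
  shows "i \<le> r \<and> r < j"
proof (rule ccontr)
  assume "\<not> (i \<le> r \<and> r < j)"
  hence c: "r < i \<or> j \<le> r" by auto
  have "inP r (x \<circ> tr i j)" unfolding inP_def
  proof (intro allI impI)
    fix k assume k: "1 \<le> k \<and> k \<le> r"
    have "1 \<le> tr i j k \<and> tr i j k \<le> r" using c k ij by (auto simp: transpose_def)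
    then show "(x \<circ> tr i j) k \<le> r" using P unfolding inP_def by auto
  qed
  with nP show False by simp
qed

lemma Dcross:
  assumes x: "x \<in> sperm n" and rn: "r \<le> n" and P: "inP r x" and ij: "1 \<le> i" "i \<le> r" "r < j"
    and a: "i \<le> a" "a < j"
  shows "D (x \<circ> tr i j) a (Suc r) = a - r + 1"
proof -
  have "D (x \<circ> tr i j) a (Suc r) + (if i \<le> a \<and> a < j \<and> Suc r \<le> x i then 1 else 0)
       = D x a (Suc r) + (if i \<le> a \<and> a < j \<and> Suc r \<le> x j then 1 else 0)"
    using Dform[of i j x a "Suc r"] ij by auto
  moreover have "x i \<le> r" using P ij unfolding inP_def by auto
  moreover have "r < x j" using P_gt[OF x rn P ij(3)] .
  moreover have "D x a (Suc r) = a - r" using D_P1[OF x rn P] .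
  ultimately show ?thesis using a by simp
qed

lemma Dout:
  assumes "1 \<le> i" "i < j" "\<not> (i \<le> a \<and> a < j)"
  shows "D (x \<circ> tr i j) a b = D x a b"
proof -
  have h1: "(if i \<le> a \<and> a < j \<and> b \<le> x i then 1 else 0) = (0::nat)" using assms by auto
  have h2: "(if i \<le> a \<and> a < j \<and> b \<le> x j then 1 else 0) = (0::nat)" using assms by auto
  show ?thesis using Dform[of i j x a b] assms h1 h2 by linarith
qed

context
  fixes n r :: nat and u v w :: "nat \<Rightarrow> nat"
  assumes r1: "1 \<le> r" and rn: "r < n"
    and u: "u \<in> sperm n" and v: "v \<in> sperm n" and w: "w \<in> sperm n"
    and Pu: "inP r u" and Pv: "inP r v" and Pw: "inP r w"
    and vu: "crit v u" and uw: "crit u w"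
begin

lemma rn': "r \<le> n" using rn by simp

lemma ysp: "1 \<le> i \<Longrightarrow> i < j \<Longrightarrow> j \<le> n \<Longrightarrow> u \<circ> tr i j \<in> sperm n"
  using perm_tr[OF u] by auto

lemma s_inj: "s r \<circ> x = s r \<circ> y \<Longrightarrow> x = y"
proof -
  assume "s r \<circ> x = s r \<circ> y"
  hence "s r \<circ> (s r \<circ> x) = s r \<circ> (s r \<circ> y)" by simp
  then show "x = y" by (simp add: s_def o_assoc)
qed

lemma sR_inj: "x \<circ> s r = y \<circ> s r \<Longrightarrow> x = y"
proof -
  assume "x \<circ> s r = y \<circ> s r"
  hence "x \<circ> s r \<circ> s r = y \<circ> s r \<circ> s r" by simp
  then show "x = y" by (simp add: s_def o_assoc[symmetric])
qed

lemma tr_ne: "1 \<le> i \<Longrightarrow> i < j \<Longrightarrow> j \<le> n \<Longrightarrow> u \<circ> tr i j \<noteq> u"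
proof
  assume "1 \<le> i" "i < j" "j \<le> n" "u \<circ> tr i j = u"
  hence "u j = u i" by (metis comp_apply transpose_apply_first)
  then show False using perm_eq_iff[OF u] \<open>i < j\<close> by simp
qed

abbreviation "p \<equiv> inv u r"
abbreviation "q \<equiv> inv u (Suc r)"

lemma pq: "1 \<le> p" "p \<le> r" "r < q" "q \<le> n" "u p = r" "u q = Suc r"
  using sL_pos[OF r1 rn u Pu] by auto

lemma pq_eq: "u i = r \<Longrightarrow> i = p" "u j = Suc r \<Longrightarrow> j = q"
  using perm_eq_iff[OF u] pq by metis+

lemma su_tr: "s r \<circ> u = u \<circ> tr p q" using sL_tr[OF r1 rn u] .

lemma le_uw: "bruhat_le n u w" using bruhat_iff u w uw by blast
lemma le_vu: "bruhat_le n v u" using bruhat_iff u v vu by blast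

lemma item3:
  assumes ij: "1 \<le> i" "i < j" "j \<le> n"
  shows "CU n u (s r \<circ> w) i j \<longleftrightarrow> CU n u w i j \<or> (i = p \<and> j = q)"
proof
  assume C: "CU n u (s r \<circ> w) i j"
  let ?y = "u \<circ> tr i j"
  have y: "?y \<in> sperm n" using ysp ij .
  have cy: "crit ?y (s r \<circ> w)" using C unfolding CU_def bruhat_iff by blast
  show "CU n u w i j \<or> (i = p \<and> j = q)"
  proof (cases "inP r ?y")
    case True
    have "crit ?y w" using crit_sL[OF r1 rn y w True Pw cy] .
    then have "CU n u w i j" using C y w unfolding CU_def bruhat_iff by blast
    then show ?thesis ..
  next
    case False
    have ir: "i \<le> r" "r < j" using cross[OF u Pu ij(1,2) False] by auto
    have uir: "u i \<le> r" using Pu ij ir unfolding inP_def by auto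
    have ujr: "r < u j" using P_gt[OF u rn' Pu ir(2)] .
    have f1: "D ?y r (Suc (Suc r)) + (if Suc (Suc r) \<le> u i then 1 else 0) = D u r (Suc (Suc r)) + (if Suc (Suc r) \<le> u j then 1 else 0)"
      using Dform[of i j u r "Suc (Suc r)"] ij ir by simp
    have f2: "D ?y r r + (if r \<le> u i then 1 else 0) = D u r r + (if r \<le> u j then 1 else 0)"
      using Dform[of i j u r r] ij ir by simp
    have e1: "D (s r \<circ> w) r (Suc (Suc r)) = 0" using Ds1[of "Suc (Suc r)" r w r] D_P2rr[OF w rn' Pw] by simp
    have e2: "D (s r \<circ> w) r r = 1" using Ds1[of r r w r] D_P2r[OF w rn' Pw r1] by simp
    have e3: "D u r (Suc (Suc r)) = 0" using D_P2rr[OF u rn' Pu] .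
    have e4: "D u r r = 1" using D_P2r[OF u rn' Pu r1] .
    have c1: "D ?y r (Suc (Suc r)) \<le> 0" using cy e1 unfolding crit_def by metis
    have c2: "D ?y r r \<le> 1" using cy e2 unfolding crit_def by metis
    have "u j = Suc r" using f1 c1 e3 uir ujr by (auto split: if_splits)
    moreover have "u i = r" using f2 c2 e4 uir ujr by (auto split: if_splits)
    ultimately show ?thesis using pq_eq by blast
  qed
next
  assume "CU n u w i j \<or> (i = p \<and> j = q)"
  then show "CU n u (s r \<circ> w) i j"
  proof
    assume C: "CU n u w i j"
    have "crit w (s r \<circ> w)" using le_crit le_sL[OF r1 rn w Pw] by blast
    then show ?thesis using C sL_sperm[OF r1 rn w] crit_trans unfolding CU_def bruhat_iff by blast
  next
    assume "i = p \<and> j = q"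
    then have yu: "u \<circ> tr i j = s r \<circ> u" using su_tr by simp
    have "bruhat_lt n u (s r \<circ> u)"
      unfolding bruhat_lt_def using le_sL[OF r1 rn u Pu] len_sL[OF r1 rn u Pu] by auto
    moreover have "bruhat_le n (s r \<circ> u) (s r \<circ> w)"
      using G3[OF r1 rn u w Pu Pw] uw sL_sperm[OF r1 rn u] sL_sperm[OF r1 rn w] bruhat_iff by blast
    moreover have "int (len n (s r \<circ> u)) - int (len n u) = 1" using len_sL[OF r1 rn u Pu] by simp
    ultimately show ?thesis unfolding CU_def yu by blast
  qed
qed


lemma force_rr:
  assumes ij: "1 \<le> i" "i < j" "j \<le> n" and nP: "\<not> inP r (u \<circ> tr i j)"
    and X: "X \<in> sperm n" "inP r X"
    and c: "\<And>a. a \<noteq> r \<Longrightarrow> D (u \<circ> tr i j) a (Suc r) \<le> D X a (Suc r)"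
  shows "i = r \<and> j = Suc r"
proof -
  have ir: "i \<le> r" "r < j" using cross[OF u Pu ij(1,2) nP] by auto
  have "\<not> i < r"
  proof
    assume "i < r"
    have "D (u \<circ> tr i j) i (Suc r) = i - r + 1" using Dcross[OF u rn' Pu ij(1) ir, of i] ij by simp
    moreover have "D X i (Suc r) = i - r" using D_P1[OF X(1) rn' X(2)] .
    ultimately show False using c[of i] \<open>i < r\<close> by simp
  qed
  moreover have "\<not> Suc r < j"
  proof
    assume "Suc r < j"
    have "D (u \<circ> tr i j) (Suc r) (Suc r) = Suc r - r + 1" using Dcross[OF u rn' Pu ij(1) ir, of "Suc r"] ir \<open>Suc r < j\<close> by simp
    moreover have "D X (Suc r) (Suc r) = Suc r - r" using D_P1[OF X(1) rn' X(2)] .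
    ultimately show False using c[of "Suc r"] by simp
  qed
  ultimately show ?thesis using ir by auto
qed

lemma item4:
  assumes ij: "1 \<le> i" "i < j" "j \<le> n"
  shows "CU n u (w \<circ> s r) i j \<longleftrightarrow> CU n u w i j \<or> (i = r \<and> j = Suc r)"
proof
  assume C: "CU n u (w \<circ> s r) i j"
  let ?y = "u \<circ> tr i j"
  have y: "?y \<in> sperm n" using ysp ij .
  have cy: "crit ?y (w \<circ> s r)" using C unfolding CU_def bruhat_iff by blast
  show "CU n u w i j \<or> (i = r \<and> j = Suc r)"
  proof (cases "inP r ?y")
    case True
    have "crit ?y w" using crit_sR[OF r1 rn y w True Pw cy] .
    then have "CU n u w i j" using C y w unfolding CU_def bruhat_iff by blast
    then show ?thesis ..
  next
    case False
    have "i = r \<and> j = Suc r"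
    proof (rule force_rr[OF ij False w Pw])
      fix a assume "a \<noteq> r"
      then show "D ?y a (Suc r) \<le> D w a (Suc r)" using cy Drs1[OF \<open>a \<noteq> r\<close> r1, of w "Suc r"] unfolding crit_def by metis
    qed
    then show ?thesis ..
  qed
next
  assume "CU n u w i j \<or> (i = r \<and> j = Suc r)"
  then show "CU n u (w \<circ> s r) i j"
  proof
    assume C: "CU n u w i j"
    have "crit w (w \<circ> s r)" using le_crit le_sR[OF r1 rn w Pw] by blast
    then show ?thesis using C sR_sperm[OF r1 rn w] crit_trans unfolding CU_def bruhat_iff by blast
  next
    assume "i = r \<and> j = Suc r"
    then have yu: "u \<circ> tr i j = u \<circ> s r" by (simp add: s_def)
    have "bruhat_lt n u (u \<circ> s r)"
      unfolding bruhat_lt_def using le_sR[OF r1 rn u Pu] len_sR[OF r1 rn u Pu] by auto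
    moreover have "bruhat_le n (u \<circ> s r) (w \<circ> s r)"
      using G4[OF r1 rn u w Pu Pw] uw sR_sperm[OF r1 rn u] sR_sperm[OF r1 rn w] bruhat_iff by blast
    moreover have "int (len n (u \<circ> s r)) - int (len n u) = 1" using len_sR[OF r1 rn u Pu] by simp
    ultimately show ?thesis unfolding CU_def yu by blast
  qed
qed

lemma item5:
  assumes ij: "1 \<le> i" "i < j" "j \<le> n"
  shows "CU n (s r \<circ> u) (s r \<circ> w) i j \<longleftrightarrow> CU n u w i j"
proof
  let ?y = "u \<circ> tr i j"
  have y: "?y \<in> sperm n" using ysp ij .
  have eq: "s r \<circ> u \<circ> tr i j = s r \<circ> ?y" by (simp add: o_assoc)
  assume C: "CU n (s r \<circ> u) (s r \<circ> w) i j"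
  have c1: "crit (s r \<circ> u) (s r \<circ> ?y)" and ne: "s r \<circ> u \<noteq> s r \<circ> ?y"
    and c2: "crit (s r \<circ> ?y) (s r \<circ> w)"
    and l: "int (len n (s r \<circ> ?y)) - int (len n (s r \<circ> u)) = 1"
    using C unfolding CU_def eq lt_iff bruhat_iff by auto
  show "CU n u w i j"
  proof (cases "inP r ?y")
    case True
    have "crit u ?y" using G3[OF r1 rn u y Pu True] c1 by simp
    moreover have "crit ?y w" using G3[OF r1 rn y w True Pw] c2 by simp
    moreover have "u \<noteq> ?y" using ne by auto
    moreover have "int (len n ?y) - int (len n u) = 1"
      using l len_sL[OF r1 rn y True] len_sL[OF r1 rn u Pu] by simp
    ultimately show ?thesis unfolding CU_def lt_iff bruhat_iff using u y w by blast
  next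
    case False
    have ir: "i \<le> r" "r < j" using cross[OF u Pu ij(1,2) False] by auto
    have uir: "u i \<le> r" using Pu ij ir unfolding inP_def by auto
    have ujr: "r < u j" using P_gt[OF u rn' Pu ir(2)] .
    let ?z = "s r \<circ> u"
    have z: "?z \<in> sperm n" using sL_sperm[OF r1 rn u] .
    have "len n ?z < len n (?z \<circ> tr i j)" using l eq by simp
    then have zlt: "?z i < ?z j" using len_lt_dir[OF z ij] by simp
    have cz: "crit (?z \<circ> tr i j) (s r \<circ> w)" using c2 eq by simp
    have f1: "D (?z \<circ> tr i j) r (Suc (Suc r)) + (if Suc (Suc r) \<le> ?z i then 1 else 0) = D ?z r (Suc (Suc r)) + (if Suc (Suc r) \<le> ?z j then 1 else 0)"
      using Dform[of i j ?z r "Suc (Suc r)"] ij ir by simp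
    have f2: "D (?z \<circ> tr i j) r r + (if r \<le> ?z i then 1 else 0) = D ?z r r + (if r \<le> ?z j then 1 else 0)"
      using Dform[of i j ?z r r] ij ir by simp
    have e1: "D (s r \<circ> w) r (Suc (Suc r)) = 0" using Ds1[of "Suc (Suc r)" r w r] D_P2rr[OF w rn' Pw] by simp
    have e2: "D (s r \<circ> w) r r = 1" using Ds1[of r r w r] D_P2r[OF w rn' Pw r1] by simp
    have e3: "D ?z r (Suc (Suc r)) = 0" using Ds1[of "Suc (Suc r)" r u r] D_P2rr[OF u rn' Pu] by simp
    have e4: "D ?z r r = 1" using Ds1[of r r u r] D_P2r[OF u rn' Pu r1] by simp
    have c1: "D (?z \<circ> tr i j) r (Suc (Suc r)) \<le> 0" using cz e1 unfolding crit_def by metis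
    have c2: "D (?z \<circ> tr i j) r r \<le> 1" using cz e2 unfolding crit_def by metis
    have zi: "?z i = (if u i = r then Suc r else u i)" using uir by (simp add: s_apply)
    have zj: "?z j = (if u j = Suc r then r else u j)" using ujr by (simp add: s_apply)
    show ?thesis
    proof (cases "u i = r")
      case True
      then show ?thesis using f1 c1 e3 zi zj zlt by (auto split: if_splits)
    next
      case False
      then show ?thesis using f1 f2 c1 c2 e3 e4 zi zj zlt uir ujr by (auto split: if_splits)
    qed
  qed
next
  let ?y = "u \<circ> tr i j"
  have y: "?y \<in> sperm n" using ysp ij .
  have eq: "s r \<circ> u \<circ> tr i j = s r \<circ> ?y" by (simp add: o_assoc)
  assume C: "CU n u w i j"
  have c1: "crit u ?y" and ne: "u \<noteq> ?y" and c2: "crit ?y w" and l: "int (len n ?y) - int (len n u) = 1"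
    using C unfolding CU_def lt_iff bruhat_iff by auto
  have Py: "inP r ?y" using crit_P[OF c2 Pw w y rn'] .
  have "crit (s r \<circ> u) (s r \<circ> ?y)" using G3[OF r1 rn u y Pu Py] c1 by simp
  moreover have "crit (s r \<circ> ?y) (s r \<circ> w)" using G3[OF r1 rn y w Py Pw] c2 by simp
  moreover have "s r \<circ> u \<noteq> s r \<circ> ?y" using ne s_inj by blast
  moreover have "int (len n (s r \<circ> ?y)) - int (len n (s r \<circ> u)) = 1"
    using l len_sL[OF r1 rn y Py] len_sL[OF r1 rn u Pu] by simp
  ultimately show "CU n (s r \<circ> u) (s r \<circ> w) i j"
    unfolding CU_def eq lt_iff bruhat_iff using sL_sperm[OF r1 rn] u y w by blast
qed

lemma item6:
  assumes ij: "1 \<le> i" "i < j" "j \<le> n"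
  shows "CD n (s r \<circ> u) v i j \<longleftrightarrow> CD n u v i j \<or> (i = p \<and> j = q)"
proof
  let ?y = "u \<circ> tr i j"
  have y: "?y \<in> sperm n" using ysp ij .
  have eq: "s r \<circ> u \<circ> tr i j = s r \<circ> ?y" by (simp add: o_assoc)
  assume C: "CD n (s r \<circ> u) v i j"
  have c1: "crit v (s r \<circ> ?y)" and c2: "crit (s r \<circ> ?y) (s r \<circ> u)" and ne: "s r \<circ> ?y \<noteq> s r \<circ> u"
    and l: "int (len n (s r \<circ> u)) - int (len n (s r \<circ> ?y)) = 1"
    using C unfolding CD_def eq lt_iff bruhat_iff by auto
  show "CD n u v i j \<or> (i = p \<and> j = q)"
  proof (cases "inP r ?y")
    case True
    have "crit ?y u" using G3[OF r1 rn y u True Pu] c2 by simp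
    moreover have "crit v ?y" using crit_sL[OF r1 rn v y Pv True c1] .
    moreover have "?y \<noteq> u" using ne by auto
    moreover have "int (len n u) - int (len n ?y) = 1"
      using l len_sL[OF r1 rn y True] len_sL[OF r1 rn u Pu] by simp
    ultimately have "CD n u v i j" unfolding CD_def lt_iff bruhat_iff using u y v by blast
    then show ?thesis ..
  next
    case False
    have ir: "i \<le> r" "r < j" using cross[OF u Pu ij(1,2) False] by auto
    have uir: "u i \<le> r" using Pu ij ir unfolding inP_def by auto
    have ujr: "r < u j" using P_gt[OF u rn' Pu ir(2)] .
    let ?z = "s r \<circ> u"
    have z: "?z \<in> sperm n" using sL_sperm[OF r1 rn u] .
    have "\<not> len n ?z < len n (?z \<circ> tr i j)" using l eq by simp
    then have "\<not> ?z i < ?z j" using len_lt_dir[OF z ij] by simp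
    moreover have "?z i \<noteq> ?z j" using perm_eq_iff[OF z] ij by simp
    ultimately have zlt: "?z j < ?z i" by simp
    have zi: "?z i = (if u i = r then Suc r else u i)" using uir by (simp add: s_apply)
    have zj: "?z j = (if u j = Suc r then r else u j)" using ujr by (simp add: s_apply)
    have "u i = r \<and> u j = Suc r" using zlt zi zj uir ujr by (auto split: if_splits)
    then show ?thesis using pq_eq by blast
  qed
next
  assume "CD n u v i j \<or> (i = p \<and> j = q)"
  then show "CD n (s r \<circ> u) v i j"
  proof
    let ?y = "u \<circ> tr i j"
    have y: "?y \<in> sperm n" using ysp ij .
    have eq: "s r \<circ> u \<circ> tr i j = s r \<circ> ?y" by (simp add: o_assoc)
    assume C: "CD n u v i j"
    have c1: "crit v ?y" and c2: "crit ?y u" and ne: "?y \<noteq> u" and l: "int (len n u) - int (len n ?y) = 1"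
      using C unfolding CD_def lt_iff bruhat_iff by auto
    have Py: "inP r ?y" using crit_P[OF c2 Pu u y rn'] .
    have "crit ?y (s r \<circ> ?y)" using le_crit le_sL[OF r1 rn y Py] by blast
    then have "crit v (s r \<circ> ?y)" using c1 crit_trans by blast
    moreover have "crit (s r \<circ> ?y) (s r \<circ> u)" using G3[OF r1 rn y u Py Pu] c2 by simp
    moreover have "s r \<circ> ?y \<noteq> s r \<circ> u" using ne s_inj by blast
    moreover have "int (len n (s r \<circ> u)) - int (len n (s r \<circ> ?y)) = 1"
      using l len_sL[OF r1 rn y Py] len_sL[OF r1 rn u Pu] by simp
    ultimately show ?thesis
      unfolding CD_def eq lt_iff bruhat_iff using sL_sperm[OF r1 rn] u y v by blast
  next
    assume "i = p \<and> j = q"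
    then have yu: "s r \<circ> u \<circ> tr i j = u" using su_tr tr_tr by simp
    have "bruhat_lt n u (s r \<circ> u)"
      unfolding bruhat_lt_def using le_sL[OF r1 rn u Pu] len_sL[OF r1 rn u Pu] by auto
    moreover have "int (len n (s r \<circ> u)) - int (len n u) = 1" using len_sL[OF r1 rn u Pu] by simp
    ultimately show ?thesis unfolding CD_def yu using le_vu by blast
  qed
qed

lemma conj_tr: "x \<circ> s r \<circ> tr (s r i) (s r j) = x \<circ> tr i j \<circ> s r"
proof -
  have b: "bij (s r)" by (simp add: s_def)
  have "tr i j \<circ> s r = s r \<circ> tr (inv (s r) i) (inv (s r) j)" using transpose_comp_eq[OF b] .
  also have "inv (s r) = s r" by (simp add: s_def)
  finally have "tr i j \<circ> s r = s r \<circ> tr (s r i) (s r j)" .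
  then show ?thesis by (simp add: o_assoc[symmetric])
qed


lemma item7:
  assumes ij: "1 \<le> i" "i < j" "j \<le> n"
  shows "CU n (u \<circ> s r) (w \<circ> s r) (s r i) (s r j) \<longleftrightarrow> CU n u w i j"
proof
  let ?y = "u \<circ> tr i j"
  have y: "?y \<in> sperm n" using ysp ij .
  have eq: "u \<circ> s r \<circ> tr (s r i) (s r j) = ?y \<circ> s r" by (rule conj_tr)
  assume C: "CU n (u \<circ> s r) (w \<circ> s r) (s r i) (s r j)"
  have c1: "crit (u \<circ> s r) (?y \<circ> s r)" and ne: "u \<circ> s r \<noteq> ?y \<circ> s r"
    and c2: "crit (?y \<circ> s r) (w \<circ> s r)"
    and l: "int (len n (?y \<circ> s r)) - int (len n (u \<circ> s r)) = 1"
    using C unfolding CU_def eq lt_iff bruhat_iff by auto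
  show "CU n u w i j"
  proof (cases "inP r ?y")
    case True
    have "crit u ?y" using G4[OF r1 rn u y Pu True] c1 by simp
    moreover have "crit ?y w" using G4[OF r1 rn y w True Pw] c2 by simp
    moreover have "u \<noteq> ?y" using ne by auto
    moreover have "int (len n ?y) - int (len n u) = 1"
      using l len_sR[OF r1 rn y True] len_sR[OF r1 rn u Pu] by simp
    ultimately show ?thesis unfolding CU_def lt_iff bruhat_iff using u y w by blast
  next
    case False
    have "i = r \<and> j = Suc r"
    proof (rule force_rr[OF ij False w Pw])
      fix a assume a: "a \<noteq> r"
      have "D (?y \<circ> s r) a (Suc r) \<le> D (w \<circ> s r) a (Suc r)" using c2 unfolding crit_def by blast
      then show "D ?y a (Suc r) \<le> D w a (Suc r)" using Drs1[OF a r1, of ?y "Suc r"] Drs1[OF a r1, of w "Suc r"] by simp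
    qed
    then have "?y \<circ> s r = u" by (simp add: s_def tr_tr)
    then show ?thesis using l len_sR[OF r1 rn u Pu] by simp
  qed
next
  let ?y = "u \<circ> tr i j"
  have y: "?y \<in> sperm n" using ysp ij .
  have eq: "u \<circ> s r \<circ> tr (s r i) (s r j) = ?y \<circ> s r" by (rule conj_tr)
  assume C: "CU n u w i j"
  have c1: "crit u ?y" and ne: "u \<noteq> ?y" and c2: "crit ?y w" and l: "int (len n ?y) - int (len n u) = 1"
    using C unfolding CU_def lt_iff bruhat_iff by auto
  have Py: "inP r ?y" using crit_P[OF c2 Pw w y rn'] .
  have "crit (u \<circ> s r) (?y \<circ> s r)" using G4[OF r1 rn u y Pu Py] c1 by simp
  moreover have "crit (?y \<circ> s r) (w \<circ> s r)" using G4[OF r1 rn y w Py Pw] c2 by simp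
  moreover have "u \<circ> s r \<noteq> ?y \<circ> s r" using ne sR_inj by blast
  moreover have "int (len n (?y \<circ> s r)) - int (len n (u \<circ> s r)) = 1"
    using l len_sR[OF r1 rn y Py] len_sR[OF r1 rn u Pu] by simp
  ultimately show "CU n (u \<circ> s r) (w \<circ> s r) (s r i) (s r j)"
    unfolding CU_def eq lt_iff bruhat_iff using sR_sperm[OF r1 rn] u y w by blast
qed

lemma item8:
  assumes ij: "1 \<le> i" "i < j" "j \<le> n" and nrr: "\<not> (i = r \<and> j = Suc r)"
  shows "CD n (u \<circ> s r) v (s r i) (s r j) \<longleftrightarrow> CD n u v i j"
proof
  let ?y = "u \<circ> tr i j"
  have y: "?y \<in> sperm n" using ysp ij .
  have eq: "u \<circ> s r \<circ> tr (s r i) (s r j) = ?y \<circ> s r" by (rule conj_tr)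
  assume C: "CD n (u \<circ> s r) v (s r i) (s r j)"
  have c1: "crit v (?y \<circ> s r)" and c2: "crit (?y \<circ> s r) (u \<circ> s r)" and ne: "?y \<circ> s r \<noteq> u \<circ> s r"
    and l: "int (len n (u \<circ> s r)) - int (len n (?y \<circ> s r)) = 1"
    using C unfolding CD_def eq lt_iff bruhat_iff by auto
  show "CD n u v i j"
  proof (cases "inP r ?y")
    case True
    have "crit ?y u" using G4[OF r1 rn y u True Pu] c2 by simp
    moreover have "crit v ?y" using crit_sR[OF r1 rn v y Pv True c1] .
    moreover have "?y \<noteq> u" using ne by auto
    moreover have "int (len n u) - int (len n ?y) = 1"
      using l len_sR[OF r1 rn y True] len_sR[OF r1 rn u Pu] by simp
    ultimately show ?thesis unfolding CD_def lt_iff bruhat_iff using u y v by blast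
  next
    case False
    have "i = r \<and> j = Suc r"
    proof (rule force_rr[OF ij False u Pu])
      fix a assume a: "a \<noteq> r"
      have "D (?y \<circ> s r) a (Suc r) \<le> D (u \<circ> s r) a (Suc r)" using c2 unfolding crit_def by blast
      then show "D ?y a (Suc r) \<le> D u a (Suc r)" using Drs1[OF a r1, of ?y "Suc r"] Drs1[OF a r1, of u "Suc r"] by simp
    qed
    with nrr show ?thesis by simp
  qed
next
  let ?y = "u \<circ> tr i j"
  have y: "?y \<in> sperm n" using ysp ij .
  have eq: "u \<circ> s r \<circ> tr (s r i) (s r j) = ?y \<circ> s r" by (rule conj_tr)
  assume C: "CD n u v i j"
  have c1: "crit v ?y" and c2: "crit ?y u" and ne: "?y \<noteq> u" and l: "int (len n u) - int (len n ?y) = 1"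
    using C unfolding CD_def lt_iff bruhat_iff by auto
  have Py: "inP r ?y" using crit_P[OF c2 Pu u y rn'] .
  have "crit ?y (?y \<circ> s r)" using le_crit le_sR[OF r1 rn y Py] by blast
  then have "crit v (?y \<circ> s r)" using c1 crit_trans by blast
  moreover have "crit (?y \<circ> s r) (u \<circ> s r)" using G4[OF r1 rn y u Py Pu] c2 by simp
  moreover have "?y \<circ> s r \<noteq> u \<circ> s r" using ne sR_inj by blast
  moreover have "int (len n (u \<circ> s r)) - int (len n (?y \<circ> s r)) = 1"
    using l len_sR[OF r1 rn y Py] len_sR[OF r1 rn u Pu] by simp
  ultimately show "CD n (u \<circ> s r) v (s r i) (s r j)"
    unfolding CD_def eq lt_iff bruhat_iff using sR_sperm[OF r1 rn] u y v by blast
qed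

lemma item8rr: "CD n (u \<circ> s r) v r (Suc r)"
proof -
  have yu: "u \<circ> s r \<circ> tr r (Suc r) = u" by (simp add: s_def tr_tr)
  have "bruhat_lt n u (u \<circ> s r)"
    unfolding bruhat_lt_def using le_sR[OF r1 rn u Pu] len_sR[OF r1 rn u Pu] by auto
  moreover have "int (len n (u \<circ> s r)) - int (len n u) = 1" using len_sR[OF r1 rn u Pu] by simp
  ultimately show ?thesis unfolding CD_def yu using le_vu by blast
qed

end



lemma SL0:
  assumes "\<And>i j. 1 \<le> i \<Longrightarrow> i < j \<Longrightarrow> j \<le> n \<Longrightarrow> Q i j = R i j"
  shows "{{i, j} | i j. 1 \<le> i \<and> i < j \<and> j \<le> n \<and> Q i j} = {{i, j} | i j. 1 \<le> i \<and> i < j \<and> j \<le> n \<and> R i j}"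
proof -
  have "\<And>i j. (1 \<le> i \<and> i < j \<and> j \<le> n \<and> Q i j) = (1 \<le> i \<and> i < j \<and> j \<le> n \<and> R i j)" using assms by blast
  then show ?thesis by simp
qed

lemma SL1:
  assumes "\<And>i j. 1 \<le> i \<Longrightarrow> i < j \<Longrightarrow> j \<le> n \<Longrightarrow> Q i j = (R i j \<or> (i = a0 \<and> j = b0))"
    and "1 \<le> a0" "a0 < b0" "b0 \<le> n"
  shows "{{i, j} | i j. 1 \<le> i \<and> i < j \<and> j \<le> n \<and> Q i j} = {{i, j} | i j. 1 \<le> i \<and> i < j \<and> j \<le> n \<and> R i j} \<union> {{a0, b0}}" (is "?L = ?R \<union> _")
proof
  show "?L \<subseteq> ?R \<union> {{a0, b0}}"
  proof
    fix X assume "X \<in> ?L"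
    then obtain i j where X: "X = {i, j}" "1 \<le> i" "i < j" "j \<le> n" "Q i j" by blast
    show "X \<in> ?R \<union> {{a0, b0}}"
    proof (cases "i = a0 \<and> j = b0")
      case True then show ?thesis using X by simp
    next
      case False
      then have "R i j" using assms(1)[OF X(2-4)] X(5) by auto
      then show ?thesis using X by blast
    qed
  qed
next
  show "?R \<union> {{a0, b0}} \<subseteq> ?L"
  proof
    fix X assume "X \<in> ?R \<union> {{a0, b0}}"
    then show "X \<in> ?L"
    proof
      assume "X \<in> ?R"
      then obtain i j where X: "X = {i, j}" "1 \<le> i" "i < j" "j \<le> n" "R i j" by blast
      then have "Q i j" using assms(1)[OF X(2-4)] by simp
      then show ?thesis using X by blast
    next
      assume "X \<in> {{a0, b0}}"
      then have X: "X = {a0, b0}" by simp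
      have "Q a0 b0" using assms(1)[OF assms(2-4)] by simp
      then show ?thesis using X assms(2-4) by blast
    qed
  qed
qed

lemma mem_pairs:
  assumes "1 \<le> a" "a < b" "b \<le> n" "P a b"
  shows "{a, b} \<in> {{i, j} | i j. 1 \<le> i \<and> i < j \<and> j \<le> n \<and> P i j}"
  unfolding mem_Collect_eq by (rule exI[of _ a], rule exI[of _ b]) (simp add: assms)

lemma mem_pairs':
  assumes "1 \<le> b" "b < a" "a \<le> n" "P b a"
  shows "{a, b} \<in> {{i, j} | i j. 1 \<le> i \<and> i < j \<and> j \<le> n \<and> P i j}"
proof -
  have "{a, b} = {b, a}" by (rule insert_commute)
  then show ?thesis using mem_pairs[of b a n P, OF assms] by simp
qed

lemma SL2:
  fixes f :: "nat \<Rightarrow> nat"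
  assumes f1: "\<And>x. x \<in> {1..n} \<Longrightarrow> f x \<in> {1..n}" and f2: "\<And>x. f (f x) = x"
    and QR: "\<And>i j. 1 \<le> i \<Longrightarrow> i < j \<Longrightarrow> j \<le> n \<Longrightarrow> Q (f i) (f j) = R i j"
    and Qs: "\<And>i j. Q i j = Q j i" and Rs: "\<And>i j. R i j = R j i"
  shows "{{i, j} | i j. 1 \<le> i \<and> i < j \<and> j \<le> n \<and> Q i j} = (\<lambda>t. f ` t) ` {{i, j} | i j. 1 \<le> i \<and> i < j \<and> j \<le> n \<and> R i j}"
proof -
  have QR': "Q (f i) (f j) = R i j" if "1 \<le> i" "i \<le> n" "1 \<le> j" "j \<le> n" "i \<noteq> j" for i j
  proof (cases "i < j")
    case True then show ?thesis using QR that by simp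
  next
    case False
    hence ji: "j < i" using that by simp
    have "Q (f j) (f i) = R j i" using QR[OF that(3) ji that(2)] .
    moreover have "Q (f i) (f j) = Q (f j) (f i)" by (rule Qs)
    moreover have "R i j = R j i" by (rule Rs)
    ultimately show ?thesis by simp
  qed
  have finj: "a = b" if "f a = f b" for a b
  proof -
    have "f (f a) = f (f b)" using that by simp
    then show ?thesis using f2[of a] f2[of b] by simp
  qed
  have fb: "1 \<le> f x \<and> f x \<le> n" if "1 \<le> x" "x \<le> n" for x using f1[of x] that by simp
  show ?thesis
  proof
    show "{{i, j} | i j. 1 \<le> i \<and> i < j \<and> j \<le> n \<and> Q i j} \<subseteq> (\<lambda>t. f ` t) ` {{i, j} | i j. 1 \<le> i \<and> i < j \<and> j \<le> n \<and> R i j}"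
    proof
      fix X assume "X \<in> {{i, j} | i j. 1 \<le> i \<and> i < j \<and> j \<le> n \<and> Q i j}"
      then obtain i j where X: "X = {i, j}" "1 \<le> i" "i < j" "j \<le> n" "Q i j" by blast
      have fi: "1 \<le> f i" "f i \<le> n" using fb[of i] X(2,3,4) by simp_all
      have fj: "1 \<le> f j" "f j \<le> n" using fb[of j] X(2,3,4) by simp_all
      have ne: "f i \<noteq> f j" using finj[of i j] X(3) by auto
      have "Q (f (f i)) (f (f j)) = R (f i) (f j)" using QR'[OF fi fj ne] .
      then have R: "R (f i) (f j)" using X(5) f2[of i] f2[of j] by simp
      have img: "X = f ` {f i, f j}" using X(1) f2[of i] f2[of j] by simp
      have M: "{f i, f j} \<in> {{i, j} | i j. 1 \<le> i \<and> i < j \<and> j \<le> n \<and> R i j}"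
      proof (cases "f i < f j")
        case True
        then show ?thesis using mem_pairs[of "f i" "f j" n R] fi fj R by simp
      next
        case False
        hence lt: "f j < f i" using ne by simp
        have "R (f j) (f i)" using R Rs[of "f i" "f j"] by simp
        then show ?thesis using mem_pairs'[of "f j" "f i" n R] fi fj lt by simp
      qed
      show "X \<in> (\<lambda>t. f ` t) ` {{i, j} | i j. 1 \<le> i \<and> i < j \<and> j \<le> n \<and> R i j}"
        by (rule image_eqI[where f="\<lambda>t. f ` t", OF _ M]) (simp add: img)
    qed
  next
    show "(\<lambda>t. f ` t) ` {{i, j} | i j. 1 \<le> i \<and> i < j \<and> j \<le> n \<and> R i j} \<subseteq> {{i, j} | i j. 1 \<le> i \<and> i < j \<and> j \<le> n \<and> Q i j}"
    proof
      fix X assume "X \<in> (\<lambda>t. f ` t) ` {{i, j} | i j. 1 \<le> i \<and> i < j \<and> j \<le> n \<and> R i j}"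
      then obtain Y where Y: "Y \<in> {{i, j} | i j. 1 \<le> i \<and> i < j \<and> j \<le> n \<and> R i j}" and XY: "X = f ` Y" by blast
      from Y obtain i j where Y': "Y = {i, j}" "1 \<le> i" "i < j" "j \<le> n" "R i j" by blast
      have X: "X = {f i, f j}" using XY Y'(1) by simp
      have fi: "1 \<le> f i" "f i \<le> n" using fb[of i] Y'(2,3,4) by simp_all
      have fj: "1 \<le> f j" "f j \<le> n" using fb[of j] Y'(2,3,4) by simp_all
      have ne: "f i \<noteq> f j" using finj[of i j] Y'(3) by auto
      have Q: "Q (f i) (f j)" using QR[OF Y'(2,3,4)] Y'(5) by simp
      show "X \<in> {{i, j} | i j. 1 \<le> i \<and> i < j \<and> j \<le> n \<and> Q i j}"
      proof (cases "f i < f j")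
        case True
        then show ?thesis using mem_pairs[of "f i" "f j" n Q] fi fj Q X by simp
      next
        case False
        hence lt: "f j < f i" using ne by simp
        have "Q (f j) (f i)" using Q Qs[of "f i" "f j"] by simp
        then show ?thesis using mem_pairs'[of "f j" "f i" n Q] fi fj lt X by simp
      qed
    qed
  qed
qed

theorem lemma5p6:
  fixes n r :: nat and u v w :: "nat \<Rightarrow> nat"
  assumes "u \<in> sperm n" and "v \<in> sperm n" and "w \<in> sperm n"
    and "bruhat_le n v u" and "bruhat_le n u w"
    and "1 \<le> r" and "r \<le> n - 1"
    and "s r \<notin> supp n w"
  shows "Tdown n u v (s r \<circ> w) = Tdown n u v w \<and> Tdown n u v (w \<circ> s r) = Tdown n u v w \<and>
     Tup n u v (s r \<circ> w) = Tup n u v w \<union> {{inv u r, inv u (Suc r)}} \<and>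
     Tup n u v (w \<circ> s r) = Tup n u v w \<union> {{r, Suc r}} \<and>
     Tup n (s r \<circ> u) v (s r \<circ> w) = Tup n u v w \<and>
     Tdown n (s r \<circ> u) v (s r \<circ> w) = Tdown n u v w \<union> {{inv u r, inv u (Suc r)}} \<and>
     Tup n (u \<circ> s r) v (w \<circ> s r) = (\<lambda>t. s r ` t) ` Tup n u v w \<and>
     Tdown n (u \<circ> s r) v (w \<circ> s r) = ((\<lambda>t. s r ` t) ` Tdown n u v w) \<union> {{r, Suc r}}"
proof -
  note u = assms(1) and v = assms(2) and w = assms(3)
  have r1: "1 \<le> r" using assms(6) .
  have rn: "r < n" using assms(6,7) by linarith
  have rn': "r \<le> n" using rn by simp
  have vu: "crit v u" using le_crit assms(4) .
  have uw: "crit u w" using le_crit assms(5) .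
  have Pw: "inP r w" using supp_P[OF w assms(8)] .
  have Pu: "inP r u" using crit_P[OF uw Pw w u rn'] .
  have Pv: "inP r v" using crit_P[OF vu Pu u v rn'] .
  note ctx = r1 rn u v w Pu Pv Pw vu uw
  note pq = pq[OF ctx]
  have e1: "Tdown n u v (s r \<circ> w) = Tdown n u v w" unfolding Tdown_def by (rule refl)
  have e2: "Tdown n u v (w \<circ> s r) = Tdown n u v w" unfolding Tdown_def by (rule refl)
  have e3: "Tup n u v (s r \<circ> w) = Tup n u v w \<union> {{inv u r, inv u (Suc r)}}"
    unfolding Tup_eq by (rule SL1[OF item3[OF ctx]]) (use pq in simp_all)
  have e4: "Tup n u v (w \<circ> s r) = Tup n u v w \<union> {{r, Suc r}}"
    unfolding Tup_eq by (rule SL1[OF item4[OF ctx]]) (use r1 rn in simp_all)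
  have e5: "Tup n (s r \<circ> u) v (s r \<circ> w) = Tup n u v w"
    unfolding Tup_eq by (rule SL0[OF item5[OF ctx]])
  have e6: "Tdown n (s r \<circ> u) v (s r \<circ> w) = Tdown n u v w \<union> {{inv u r, inv u (Suc r)}}"
    unfolding Tdown_eq by (rule SL1[OF item6[OF ctx]]) (use pq in simp_all)
  have sf1: "\<And>x. x \<in> {1..n} \<Longrightarrow> s r x \<in> {1..n}" using r1 rn by (auto simp: s_apply)
  have sf2: "\<And>x. s r (s r x) = x" by (simp add: s_def)
  have e7: "Tup n (u \<circ> s r) v (w \<circ> s r) = (\<lambda>t. s r ` t) ` Tup n u v w"
    unfolding Tup_eq
    by (rule SL2[where f="s r" and Q="CU n (u \<circ> s r) (w \<circ> s r)" and R="CU n u w", OF sf1 sf2 item7[OF ctx] CU_sym CU_sym])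
  define R' where "R' i j \<longleftrightarrow> CD n u v i j \<or> {i, j} = {r, Suc r}" for i j
  have R's: "R' i j = R' j i" for i j unfolding R'_def using CD_sym[of n u v i j] by (simp add: insert_commute)
  have e8a: "{{i, j} | i j. 1 \<le> i \<and> i < j \<and> j \<le> n \<and> CD n (u \<circ> s r) v i j}
      = (\<lambda>t. s r ` t) ` {{i, j} | i j. 1 \<le> i \<and> i < j \<and> j \<le> n \<and> R' i j}"
  proof (rule SL2[where f="s r" and Q="CD n (u \<circ> s r) v" and R=R'])
    show "\<And>x. x \<in> {1..n} \<Longrightarrow> s r x \<in> {1..n}" by (rule sf1)
    show "\<And>x. s r (s r x) = x" by (rule sf2)
  next
    fix i j assume ij: "1 \<le> i" "i < j" "j \<le> n"
    show "CD n (u \<circ> s r) v (s r i) (s r j) = R' i j"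
    proof (cases "i = r \<and> j = Suc r")
      case True
      have "CD n (u \<circ> s r) v (s r i) (s r j)" using True item8rr[OF ctx] CD_sym by (simp add: s_apply)
      then show ?thesis using True unfolding R'_def by simp
    next
      case False
      have "{i, j} \<noteq> {r, Suc r}" using False ij by (auto simp: doubleton_eq_iff)
      then show ?thesis using item8[OF ctx ij False] unfolding R'_def by simp
    qed
  qed (rule CD_sym, rule R's)
  have e8b: "{{i, j} | i j. 1 \<le> i \<and> i < j \<and> j \<le> n \<and> R' i j}
      = {{i, j} | i j. 1 \<le> i \<and> i < j \<and> j \<le> n \<and> CD n u v i j} \<union> {{r, Suc r}}"
    by (rule SL1) (use r1 rn in \<open>auto simp: R'_def doubleton_eq_iff\<close>)
  have e8c: "s r ` {r, Suc r} = {r, Suc r}" by (auto simp: s_apply)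
  have e8: "Tdown n (u \<circ> s r) v (w \<circ> s r) = ((\<lambda>t. s r ` t) ` Tdown n u v w) \<union> {{r, Suc r}}"
    unfolding Tdown_eq e8a e8b using e8c by simp
  show ?thesis by (intro conjI e1 e2 e3 e4 e5 e6 e7 e8)
qed


end
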